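(* Let $\Omega$ be a bounded open subset of $\mathbb{R}^N$, fix $a>0$ and set $p=2(a+1)$. Define $g:\mathbb{R}\times\mathbb{C}\to\mathbb{C}$ by $g(\alpha,v)=|v|^\alpha v$ if $\alpha>0$ and $g(\alpha,v)=v$ if $\alpha\le0$, and let $G(\alpha,v)(\cdot)=g(\alpha,v(\cdot))$ for $(\alpha,v)\in(-\infty,a]\times L^p(\Omega)$, so that $G$ is Fréchet differentiable in $v$ with derivative $\partial_vG(\alpha,v)\in\mathcal{L}(L^p(\Omega),L^2(\Omega))$ given by $\partial_vG(\alpha,v)u=|v|^\alpha u+\alpha|v|^{\alpha-2}v\,\mathrm{Re}(\bar v u)$ (interpreted as $0$ where $v=0$) if $\alpha>0$, and $\partial_vG(\alpha,v)u=u$ if $\alpha\le0$. Let $v\in L^p(\Omega)$ satisfy $v(x)\ne0$ for a.e. $x\in\Omega$. Then the map $(\alpha,w)\mapsto\partial_vG(\alpha,w)$, from $(-\infty,a]\times L^p(\Omega)$ to $\mathcal{L}(L^p(\Omega),L^2(\Omega))$ (operator norm topology), is continuous at $(0,v)$.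
   Context: Lebesgue spaces $L^r(\Omega)$ consist of complex-valued functions and are regarded as real Banach spaces; $\mathcal{L}(L^p(\Omega),L^2(\Omega))$ denotes bounded real-linear operators with the operator norm. *)

theory Defs
  imports "HOL-Analysis.Analysis"
begin

text \<open>Functions in L^r(Omega) are represented by complex-valued functions on the ambient
  Euclidean space, measured with Lebesgue measure restricted to Omega.\<close>

definition memLp :: "'n::euclidean_space set \<Rightarrow> real \<Rightarrow> ('n \<Rightarrow> complex) \<Rightarrow> bool" where
  "memLp \<Omega> r f \<longleftrightarrow> f \<in> borel_measurable (lebesgue_on \<Omega>) \<and>
      integrable (lebesgue_on \<Omega>) (\<lambda>x. norm (f x) powr r)"

definition Lpnorm :: "'n::euclidean_space set \<Rightarrow> real \<Rightarrow> ('n \<Rightarrow> complex) \<Rightarrow> real" where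
  "Lpnorm \<Omega> r f = (\<integral>x. norm (f x) powr r \<partial>(lebesgue_on \<Omega>)) powr (1 / r)"

definition gfun :: "real \<Rightarrow> complex \<Rightarrow> complex" where
  "gfun \<alpha> z = (if \<alpha> > 0 then complex_of_real (norm z powr \<alpha>) * z else z)"

definition dG :: "real \<Rightarrow> ('n \<Rightarrow> complex) \<Rightarrow> ('n \<Rightarrow> complex) \<Rightarrow> ('n \<Rightarrow> complex)" where
  "dG \<alpha> v u = (\<lambda>x. if \<alpha> > 0 then
       (if v x = 0 then 0 else
          complex_of_real (norm (v x) powr \<alpha>) * u x
          + complex_of_real (\<alpha> * norm (v x) powr (\<alpha> - 2) * Re (cnj (v x) * u x)) * v x)
     else u x)"

text \<open>Operator norm in L(L^p(Omega), L^2(Omega)) of a (real-linear) operator T (valued in ereal,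
  so that unbounded operators get norm infinity).\<close>
definition opnorm_p2 :: "'n::euclidean_space set \<Rightarrow> real \<Rightarrow> (('n \<Rightarrow> complex) \<Rightarrow> ('n \<Rightarrow> complex)) \<Rightarrow> ereal" where
  "opnorm_p2 \<Omega> p T = (SUP u\<in>{u. memLp \<Omega> p u \<and> Lpnorm \<Omega> p u \<le> 1}. ereal (Lpnorm \<Omega> 2 (T u)))"

end

theory Submission
  imports Defs
begin

lemma powr_sum_le:
  fixes x y p :: real
  assumes "x \<ge> 0" "y \<ge> 0" "p > 0"
  shows "(x + y) powr p \<le> 2 powr p * (x powr p + y powr p)"
proof -
  let ?m = "max x y"
  have "(x + y) powr p \<le> (2 * ?m) powr p"
    using assms by (intro powr_mono2; auto)
  also have "\<dots> = 2 powr p * ?m powr p" using assms by (simp add: powr_mult)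
  also have "?m powr p \<le> x powr p + y powr p"
    using assms by (cases "x \<le> y") (auto simp: max_def)
  then have "2 powr p * ?m powr p \<le> 2 powr p * (x powr p + y powr p)" by simp
  finally show ?thesis .
qed

lemma young_lemma:
  fixes h U t a :: real
  assumes "h \<ge> 0" "U \<ge> 0" "t > 0" "a > 0"
  shows "h powr 2 * U powr 2 \<le> t powr ((a+1)/a) * h powr (2*(a+1)/a)
            + t powr (-(a+1)) * U powr (2*(a+1))"
proof (cases "h = 0 \<or> U = 0")
  case True then show ?thesis using assms by auto
next
  case False
  define P where "P = (a+1)/a"
  define Q where "Q = a+1"
  have P1: "P > 1" "Q > 1" using assms by (auto simp: P_def Q_def field_simps)
  have PQ: "1/P + 1/Q = 1" using assms by (simp add: P_def Q_def field_simps)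
  define A where "A = t * h powr 2"
  define B where "B = U powr 2 / t"
  have "A * B \<le> A powr P / P + B powr Q / Q"
    by (rule Youngs_inequality[OF P1 PQ]) (use assms in \<open>auto simp: A_def B_def\<close>)
  also have "A powr P / P \<le> A powr P" using P1
    by (simp add: divide_le_eq mult_left_mono[of 1 P "A powr P", simplified])
  also have "B powr Q / Q \<le> B powr Q" using P1
    by (simp add: divide_le_eq mult_left_mono[of 1 Q "B powr Q", simplified])
  finally have 1: "A * B \<le> A powr P + B powr Q" by simp
  have "A * B = h powr 2 * U powr 2" using assms by (simp add: A_def B_def)
  moreover have "A powr P = t powr ((a+1)/a) * h powr (2*(a+1)/a)"
  proof -
    have "A powr P = t powr P * (h powr 2) powr P"
      unfolding A_def using assms by (auto intro!: powr_mult)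
    also have "(h powr 2) powr P = h powr (2*P)" by (rule powr_powr)
    finally show ?thesis by (simp add: P_def)
  qed
  moreover have "B powr Q = t powr (-(a+1)) * U powr (2*(a+1))"
  proof -
    have "B powr Q = (U powr 2) powr Q / t powr Q"
      unfolding B_def using assms by (auto intro!: powr_divide)
    also have "(U powr 2) powr Q = U powr (2*Q)" by (rule powr_powr)
    moreover have "t powr (-(a+1)) = inverse (t powr Q)" unfolding Q_def by (rule powr_minus)
    ultimately show ?thesis by (simp add: Q_def divide_inverse mult.commute)
  qed
  ultimately show ?thesis using 1 by simp
qed


lemma dG_diff_bound:
  fixes z y :: complex and \<alpha> :: real
  assumes "\<alpha> > 0"
  shows "norm ((if z = 0 then 0 else
          complex_of_real (norm z powr \<alpha>) * y
          + complex_of_real (\<alpha> * norm z powr (\<alpha> - 2) * Re (cnj z * y)) * z) - y)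
     \<le> (\<bar>norm z powr \<alpha> - 1\<bar> + \<alpha> * norm z powr \<alpha>) * norm y"
proof (cases "z = 0")
  case True then show ?thesis by simp
next
  case False
  define n where "n = norm z"
  have n: "n > 0" using False by (simp add: n_def)
  define c where "c = \<alpha> * n powr (\<alpha> - 2) * Re (cnj z * y)"
  have eq: "complex_of_real (n powr \<alpha>) * y + complex_of_real c * z - y
      = complex_of_real (n powr \<alpha> - 1) * y + complex_of_real c * z"
    by (simp add: algebra_simps)
  have "\<bar>Re (cnj z * y)\<bar> \<le> n * norm y"
    using abs_Re_le_cmod[of "cnj z * y"] by (simp add: norm_mult n_def)
  then have "\<bar>c\<bar> * n \<le> \<alpha> * n powr (\<alpha> - 2) * (n * norm y) * n"
    using assms n by (auto simp: c_def abs_mult mult.commute intro!: mult_right_mono mult_left_mono)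
  also have "\<dots> = \<alpha> * (n powr (\<alpha> - 2) * n powr 2) * norm y"
    using n by (simp add: powr_numeral power2_eq_square)
  also have "n powr (\<alpha> - 2) * n powr 2 = n powr \<alpha>"
    by (simp add: powr_add[symmetric])
  finally have cb: "\<bar>c\<bar> * n \<le> \<alpha> * n powr \<alpha> * norm y" by simp
  have "norm (complex_of_real (n powr \<alpha> - 1) * y + complex_of_real c * z)
       \<le> \<bar>n powr \<alpha> - 1\<bar> * norm y + \<bar>c\<bar> * n"
    by (rule order_trans[OF norm_triangle_ineq]) (simp add: norm_mult n_def del: of_real_diff)
  also have "\<dots> \<le> (\<bar>n powr \<alpha> - 1\<bar> + \<alpha> * n powr \<alpha>) * norm y"
    using cb by (simp add: algebra_simps)
  finally have "norm (complex_of_real (n powr \<alpha>) * y + complex_of_real c * z - y)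
      \<le> (\<bar>n powr \<alpha> - 1\<bar> + \<alpha> * n powr \<alpha>) * norm y" by (simp only: eq)
  then show ?thesis using False unfolding n_def c_def by simp
qed


lemma phi_bound:
  fixes s \<alpha> \<alpha>0 a \<eta> K :: real
  assumes "0 < \<alpha>" "\<alpha> \<le> \<alpha>0" "\<alpha>0 \<le> a" "0 < \<eta>" "\<eta> \<le> 1" "1 \<le> K" "s \<ge> 0"
  shows "(\<bar>s powr \<alpha> - 1\<bar> + \<alpha> * s powr \<alpha>) powr (2*(a+1)/a)
     \<le> ((K powr \<alpha>0 - 1) + (1 - \<eta> powr \<alpha>0) + \<alpha>0 * K powr \<alpha>0) powr (2*(a+1)/a)
       + ((2+a) * 2) powr (2*(a+1)/a) * (if \<eta> \<le> s \<and> s \<le> K then 0 else 1 + s powr (2*(a+1)))"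
proof -
  define q where "q = 2*(a+1)/a"
  have a: "a > 0" using assms by linarith
  have q: "q > 0" using a by (simp add: q_def)
  define \<phi> where "\<phi> = \<bar>s powr \<alpha> - 1\<bar> + \<alpha> * s powr \<alpha>"
  define S0 where "S0 = (K powr \<alpha>0 - 1) + (1 - \<eta> powr \<alpha>0) + \<alpha>0 * K powr \<alpha>0"
  have phi0: "\<phi> \<ge> 0" using assms by (simp add: \<phi>_def)
  show ?thesis
  proof (cases "\<eta> \<le> s \<and> s \<le> K")
    case True
    have s: "s > 0" using True assms by linarith
    have up: "s powr \<alpha> \<le> K powr \<alpha>0"
      using powr_mono2[of \<alpha> s K] powr_mono[of \<alpha> \<alpha>0 K] True assms by linarith
    have lo: "\<eta> powr \<alpha>0 \<le> s powr \<alpha>"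
      using powr_mono2[of \<alpha> \<eta> s] powr_mono'[of \<alpha> \<alpha>0 \<eta>] True assms by linarith
    have K1: "1 \<le> K powr \<alpha>0" using assms by (intro ge_one_powr_ge_zero; auto)
    have e1: "\<eta> powr \<alpha>0 \<le> 1" using assms by (intro powr_le1; auto)
    have "\<alpha> * s powr \<alpha> \<le> \<alpha>0 * K powr \<alpha>0"
      using up assms by (intro mult_mono; auto)
    then have "\<phi> \<le> S0" using up lo K1 e1 unfolding \<phi>_def S0_def by (auto simp: abs_if)
    then have "\<phi> powr q \<le> S0 powr q" using phi0 q by (intro powr_mono2; auto)
    then show ?thesis using True by (simp add: q_def \<phi>_def S0_def)
  next
    case False
    have sa: "s powr \<alpha> \<le> 1 + s powr a"
    proof (cases "s \<le> 1")
      case True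
      then have "s powr \<alpha> \<le> 1" using assms by (intro powr_le1; auto)
      moreover have "0 \<le> s powr a" by simp
      ultimately show ?thesis by linarith
    next
      case False
      then have "s powr \<alpha> \<le> s powr a" using assms by (intro powr_mono; auto)
      then show ?thesis by linarith
    qed
    have "\<phi> \<le> 1 + (1 + \<alpha>) * s powr \<alpha>" unfolding \<phi>_def by (auto simp: abs_if algebra_simps)
    also have "\<dots> \<le> 1 + (1 + a) * (1 + s powr a)"
      using sa assms by (intro add_left_mono mult_mono) auto
    also have "\<dots> \<le> (2 + a) * (1 + s powr a)" using a by (simp add: algebra_simps)
    finally have pb: "\<phi> \<le> (2 + a) * (1 + s powr a)" .
    have "\<phi> powr q \<le> ((2 + a) * (1 + s powr a)) powr q" using pb phi0 q by (intro powr_mono2; auto)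
    also have "\<dots> = (2 + a) powr q * (1 + s powr a) powr q" using a by (intro powr_mult; auto)
    also have "(1 + s powr a) powr q \<le> 2 powr q * (1 powr q + (s powr a) powr q)"
      using q by (intro powr_sum_le; auto)
    also have "(s powr a) powr q = s powr (2*(a+1))" using a by (simp add: powr_powr q_def)
    finally have "\<phi> powr q \<le> (2 + a) powr q * (2 powr q * (1 + s powr (2*(a+1))))"
      using a by (simp add: mult_left_mono)
    also have "\<dots> = ((2+a) * 2) powr q * (1 + s powr (2*(a+1)))"
    proof -
      have e: "((2+a)*2) powr q = (2+a) powr q * 2 powr q" using a by (intro powr_mult; auto)
      show ?thesis unfolding e by (simp only: mult.assoc)
    qed
    finally have "\<phi> powr q \<le> ((2+a) * 2) powr q * (1 + s powr (2*(a+1)))" .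
    moreover have "0 \<le> S0 powr q" by simp
    ultimately have "\<phi> powr q \<le> S0 powr q + ((2+a) * 2) powr q * (if \<eta> \<le> s \<and> s \<le> K then 0 else 1 + s powr (2*(a+1)))"
      using False by (simp only: if_False)
    then show ?thesis unfolding q_def \<phi>_def S0_def .
  qed
qed


lemma bad_bound:
  fixes s r d \<eta> K p :: real
  assumes "s \<ge> 0" "r \<ge> 0" "d \<ge> 0" "s \<le> r + d" "r \<le> s + d" "0 < \<eta>" "2*\<eta> \<le> K/2" "p > 0"
  shows "(if \<eta> \<le> s \<and> s \<le> K then 0 else 1 + s powr p)
    \<le> (1 + 2 powr (p+1) * r powr p) * (if 2*\<eta> \<le> r \<and> r \<le> K/2 then 0 else 1)
      + ((1 + 2 powr p * (K/2) powr p) / \<eta> powr p + 2 powr p) * d powr p"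
proof -
  have sp: "s powr p \<le> 2 powr p * (r powr p + d powr p)"
    using powr_mono2[of p s "r + d"] powr_sum_le[of r d p] assms by linarith
  have p2: "2 powr (p+1) = 2 * 2 powr p" by (simp add: powr_add)
  have nn1: "0 \<le> (1 + 2 powr (p+1) * r powr p)" by (simp add: add_nonneg_nonneg)
  have nn2: "0 \<le> ((1 + 2 powr p * (K/2) powr p) / \<eta> powr p + 2 powr p) * d powr p"
    by (intro mult_nonneg_nonneg add_nonneg_nonneg divide_nonneg_nonneg) auto
  show ?thesis
  proof (cases "\<eta> \<le> s \<and> s \<le> K")
    case True
    then show ?thesis using nn1 nn2 by simp
  next
    case sbad: False
    show ?thesis
    proof (cases "2*\<eta> \<le> r \<and> r \<le> K/2")
      case False
      have "1 + s powr p \<le> 1 + 2 powr (p+1) * r powr p + 2 powr p * d powr p"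
      proof -
        have h: "0 \<le> 2 powr p * r powr p" by simp
        have sp': "s powr p \<le> 2 powr p * r powr p + 2 powr p * d powr p"
          using sp by (simp only: distrib_left)
        have e: "2 powr (p+1) * r powr p = 2 * (2 powr p * r powr p)" unfolding p2 by simp
        show ?thesis unfolding e using h sp' by linarith
      qed
      also have "2 powr p * d powr p \<le> ((1 + 2 powr p * (K/2) powr p) / \<eta> powr p + 2 powr p) * d powr p"
        by (intro mult_right_mono) auto
      finally have "1 + s powr p \<le> (1 + 2 powr (p+1) * r powr p) * 1
      + ((1 + 2 powr p * (K/2) powr p) / \<eta> powr p + 2 powr p) * d powr p" by simp
      then show ?thesis using sbad False by (simp only: if_False)
    next
      case rgood: True
      have "\<eta> \<le> d" using sbad rgood assms by auto
      then have de: "\<eta> powr p \<le> d powr p" using assms by (intro powr_mono2; auto)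
      have ep: "\<eta> powr p > 0" using assms by simp
      have rK: "r powr p \<le> (K/2) powr p" using rgood assms by (intro powr_mono2; auto)
      define c where "c = 1 + 2 powr p * (K/2) powr p"
      have c0: "c \<ge> 0" by (simp add: c_def add_nonneg_nonneg)
      have "1 + s powr p \<le> c + 2 powr p * d powr p"
      proof -
        have sp': "s powr p \<le> 2 powr p * r powr p + 2 powr p * d powr p"
          using sp by (simp only: distrib_left)
        have "2 powr p * r powr p \<le> 2 powr p * (K/2) powr p" using rK by (simp add: mult_left_mono)
        then show ?thesis using sp' unfolding c_def by linarith
      qed
      also have "c \<le> c / \<eta> powr p * d powr p"
      proof -
        have "c * \<eta> powr p \<le> c * d powr p" using de c0 by (rule mult_left_mono)
        then show ?thesis using ep by (simp add: field_simps)
      qed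
      finally have "1 + s powr p \<le> (c / \<eta> powr p + 2 powr p) * d powr p"
        by (simp add: algebra_simps)
      then have "1 + s powr p \<le> (1 + 2 powr (p+1) * r powr p) * 0 
        + ((1 + 2 powr p * (K/2) powr p) / \<eta> powr p + 2 powr p) * d powr p" by (simp add: c_def)
      then show ?thesis using sbad rgood by (simp only: if_False if_True conj_absorb)
    qed
  qed
qed


lemma pointwise_bound:
  fixes z y x :: complex and a \<alpha> \<alpha>0 \<eta> K t :: real
  assumes "a > 0" "0 < \<alpha>" "\<alpha> \<le> \<alpha>0" "\<alpha>0 \<le> a" "0 < \<eta>" "\<eta> \<le> 1" "1 \<le> K" "2*\<eta> \<le> K/2" "t > 0"
  shows "norm ((if z = 0 then 0 else
          complex_of_real (norm z powr \<alpha>) * y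
          + complex_of_real (\<alpha> * norm z powr (\<alpha> - 2) * Re (cnj z * y)) * z) - y) powr 2
    \<le> t powr ((a+1)/a) * (((K powr \<alpha>0 - 1) + (1 - \<eta> powr \<alpha>0) + \<alpha>0 * K powr \<alpha>0) powr (2*(a+1)/a)
       + ((2+a) * 2) powr (2*(a+1)/a) *
         ((1 + 2 powr (2*(a+1)+1) * norm x powr (2*(a+1))) * (if 2*\<eta> \<le> norm x \<and> norm x \<le> K/2 then 0 else 1)
          + ((1 + 2 powr (2*(a+1)) * (K/2) powr (2*(a+1))) / \<eta> powr (2*(a+1)) + 2 powr (2*(a+1))) * norm (z - x) powr (2*(a+1))))
      + t powr (-(a+1)) * norm y powr (2*(a+1))"
proof -
  define \<phi> where "\<phi> = \<bar>norm z powr \<alpha> - 1\<bar> + \<alpha> * norm z powr \<alpha>"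
  define N where "N = norm ((if z = 0 then 0 else
          complex_of_real (norm z powr \<alpha>) * y
          + complex_of_real (\<alpha> * norm z powr (\<alpha> - 2) * Re (cnj z * y)) * z) - y)"
  define T1 where "T1 = t powr ((a+1)/a)"
  have phi0: "\<phi> \<ge> 0" using assms by (simp add: \<phi>_def)
  have "N \<le> \<phi> * norm y" unfolding N_def \<phi>_def by (rule dG_diff_bound[OF assms(2)])
  then have "N powr 2 \<le> (\<phi> * norm y) powr 2" by (intro powr_mono2; simp add: N_def)
  also have "\<dots> = \<phi> powr 2 * norm y powr 2" using phi0 by (intro powr_mult; simp)
  also have "\<dots> \<le> T1 * \<phi> powr (2*(a+1)/a) + t powr (-(a+1)) * norm y powr (2*(a+1))"
    unfolding T1_def using phi0 assms by (intro young_lemma; simp)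
  also have "\<phi> powr (2*(a+1)/a) \<le> ((K powr \<alpha>0 - 1) + (1 - \<eta> powr \<alpha>0) + \<alpha>0 * K powr \<alpha>0) powr (2*(a+1)/a)
       + ((2+a) * 2) powr (2*(a+1)/a) * (if \<eta> \<le> norm z \<and> norm z \<le> K then 0 else 1 + norm z powr (2*(a+1)))"
    unfolding \<phi>_def using assms by (intro phi_bound; simp)
  also have "(if \<eta> \<le> norm z \<and> norm z \<le> K then 0 else 1 + norm z powr (2*(a+1)))
     \<le> (1 + 2 powr (2*(a+1)+1) * norm x powr (2*(a+1))) * (if 2*\<eta> \<le> norm x \<and> norm x \<le> K/2 then 0 else 1)
          + ((1 + 2 powr (2*(a+1)) * (K/2) powr (2*(a+1))) / \<eta> powr (2*(a+1)) + 2 powr (2*(a+1))) * norm (z - x) powr (2*(a+1))"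
    using assms norm_triangle_ineq2[of z x] norm_triangle_ineq3[of z x] 
    by (intro bad_bound) (auto simp: norm_minus_commute)
  finally show ?thesis unfolding N_def T1_def
    by (simp add: mult_left_mono add_left_mono)
qed


lemma Lpnorm_less:
  assumes "r > 0" "Lpnorm \<Omega> r f < \<delta>"
  shows "(\<integral>x. norm (f x) powr r \<partial>lebesgue_on \<Omega>) < \<delta> powr r"
proof -
  define I where "I = (\<integral>x. norm (f x) powr r \<partial>lebesgue_on \<Omega>)"
  have I0: "I \<ge> 0" unfolding I_def by (simp add: Bochner_Integration.integral_nonneg)
  have "I = (I powr (1/r)) powr r" using I0 assms by (simp add: powr_powr)
  also have "\<dots> < \<delta> powr r" using assms by (intro powr_less_mono2) (auto simp: Lpnorm_def I_def)
  finally show ?thesis unfolding I_def .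
qed

lemma Lpnorm_le:
  assumes "r > 0" "Lpnorm \<Omega> r f \<le> \<delta>"
  shows "(\<integral>x. norm (f x) powr r \<partial>lebesgue_on \<Omega>) \<le> \<delta> powr r"
proof -
  define I where "I = (\<integral>x. norm (f x) powr r \<partial>lebesgue_on \<Omega>)"
  have I0: "I \<ge> 0" unfolding I_def by (simp add: Bochner_Integration.integral_nonneg)
  have "I = (I powr (1/r)) powr r" using I0 assms by (simp add: powr_powr)
  also have "\<dots> \<le> \<delta> powr r" using assms by (intro powr_mono2) (auto simp: Lpnorm_def I_def)
  finally show ?thesis unfolding I_def .
qed

lemma choose_alpha0:
  fixes \<eta> K a q c \<mu> :: real
  assumes "0 < \<eta>" "0 < K" "a > 0" "q > 0" "c > 0" "\<mu> \<ge> 0" "\<eta> \<le> 1" "1 \<le> K"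
  shows "\<exists>\<alpha>0>0. \<alpha>0 \<le> a \<and> ((K powr \<alpha>0 - 1) + (1 - \<eta> powr \<alpha>0) + \<alpha>0 * K powr \<alpha>0) powr q * \<mu> \<le> c"
proof -
  define S where "S = (\<lambda>\<alpha>::real. (K powr \<alpha> - 1) + (1 - \<eta> powr \<alpha>) + \<alpha> * K powr \<alpha>)"
  have "(S \<longlongrightarrow> S 0) (at 0)" unfolding S_def using assms
    by (intro tendsto_intros) auto
  moreover have "S 0 = 0" using assms by (simp add: S_def)
  ultimately have lim: "(S \<longlongrightarrow> 0) (at 0)" by simp
  define \<theta> where "\<theta> = (c / (\<mu> + 1)) powr (1/q)"
  have th: "\<theta> > 0" using assms by (simp add: \<theta>_def)
  have "eventually (\<lambda>\<alpha>. S \<alpha> < \<theta>) (at 0)" using order_tendstoD(2)[OF lim th] .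
  then obtain d where d: "d > 0" "\<And>x. x \<noteq> 0 \<Longrightarrow> dist x 0 < d \<Longrightarrow> S x < \<theta>"
    unfolding eventually_at by blast
  define \<alpha>0 where "\<alpha>0 = min (d/2) a"
  have a0: "\<alpha>0 > 0" "\<alpha>0 \<le> a" using d assms by (auto simp: \<alpha>0_def)
  have "S \<alpha>0 < \<theta>" using d a0 by (intro d(2)) (auto simp: \<alpha>0_def)
  moreover have "S \<alpha>0 \<ge> 0"
  proof -
    have "1 \<le> K powr \<alpha>0" using assms a0 by (intro ge_one_powr_ge_zero) auto
    moreover have "\<eta> powr \<alpha>0 \<le> 1" using assms a0 by (intro powr_le1) auto
    ultimately show ?thesis using a0 by (simp add: S_def)
  qed
  ultimately have "S \<alpha>0 powr q \<le> \<theta> powr q" using assms by (intro powr_mono2) auto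
  also have "\<theta> powr q = c / (\<mu> + 1)" using assms by (simp add: \<theta>_def powr_powr)
  finally have "S \<alpha>0 powr q * \<mu> \<le> c / (\<mu> + 1) * \<mu>" using assms by (intro mult_right_mono) auto
  also have "\<dots> \<le> c" using assms by (simp add: field_simps)
  finally show ?thesis using a0 unfolding S_def by blast
qed


lemma choose_eta_K:
  fixes M and v :: "'a \<Rightarrow> complex" and p c :: real
  assumes fm: "finite_measure M" and vm: "v \<in> borel_measurable M"
    and vi: "integrable M (\<lambda>x. norm (v x) powr p)" and ae: "AE x in M. v x \<noteq> 0" and c: "c > 0"
  shows "\<exists>\<eta> K. 0 < \<eta> \<and> \<eta> \<le> 1 \<and> 1 \<le> K \<and> 2*\<eta> \<le> K/2 \<and>
    integrable M (\<lambda>x. (1 + 2 powr (p+1) * norm (v x) powr p) * (if 2*\<eta> \<le> norm (v x) \<and> norm (v x) \<le> K/2 then 0 else 1)) \<and>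
    (\<integral>x. (1 + 2 powr (p+1) * norm (v x) powr p) * (if 2*\<eta> \<le> norm (v x) \<and> norm (v x) \<le> K/2 then 0 else 1) \<partial>M) < c"
proof -
  define w0 where "w0 = (\<lambda>x. 1 + 2 powr (p+1) * norm (v x) powr p)"
  define s where "s = (\<lambda>n::nat. \<lambda>x. w0 x * (if 2*(1/real (n+2)) \<le> norm (v x) \<and> norm (v x) \<le> real (n+2)/2 then 0 else 1))"
  interpret finite_measure M by (rule fm)
  have w0i: "integrable M w0" unfolding w0_def using vi by auto
  have w0m[measurable]: "w0 \<in> borel_measurable M" using w0i by auto
  note vm[measurable]
  have w0pos: "w0 x \<ge> 0" for x unfolding w0_def by (simp add: add_nonneg_nonneg)
  have sm: "s n \<in> borel_measurable M" for n unfolding s_def by measurable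
  have lim: "AE x in M. (\<lambda>n. s n x) \<longlonglongrightarrow> 0"
    using ae
  proof eventually_elim
    fix x assume vx: "v x \<noteq> 0"
    define r where "r = norm (v x)"
    have r: "r > 0" using vx by (simp add: r_def)
    have "eventually (\<lambda>n. s n x = 0) sequentially"
      unfolding eventually_sequentially
    proof (intro exI allI impI)
      fix n assume n: "nat \<lceil>2/r + 2*r\<rceil> \<le> n"
      then have n1: "2/r + 2*r \<le> real (n+2)" by linarith
      have r2: "0 \<le> 2 / r" using r by simp
      have "2 / r \<le> real (n+2)" using n1 r by linarith
      then have "2 * (1 / real (n+2)) \<le> r" using r by (simp add: field_simps)
      moreover have "2 * r \<le> real (n+2)" using n1 r2 by linarith
      then have "r \<le> real (n+2) / 2" by simp
      ultimately show "s n x = 0" unfolding s_def r_def by simp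
    qed
    then show "(\<lambda>n. s n x) \<longlonglongrightarrow> 0" by (rule tendsto_eventually)
  qed
  have bound: "AE x in M. norm (s n x) \<le> w0 x" for n
    using w0pos by (auto simp: s_def)
  have "(\<lambda>n. integral\<^sup>L M (s n)) \<longlonglongrightarrow> integral\<^sup>L M (\<lambda>x. 0::real)"
    by (rule integral_dominated_convergence[OF _ sm w0i lim bound]) auto
  then have "(\<lambda>n. integral\<^sup>L M (s n)) \<longlonglongrightarrow> 0" by simp
  from order_tendstoD(2)[OF this c] obtain n where n: "integral\<^sup>L M (s n) < c"
    by (auto simp: eventually_sequentially)
  have si: "integrable M (s n)"
    by (rule integrable_dominated_convergence2[OF _ sm w0i lim bound]) auto
  define \<eta> where "\<eta> = 1 / real (n+2)"
  define K where "K = real (n+2)"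
  have "2 * \<eta> \<le> K / 2"
  proof -
    have "4 \<le> real (n+2) * real (n+2)" by (simp add: algebra_simps)
    then show ?thesis by (simp add: \<eta>_def K_def field_simps)
  qed
  moreover have "0 < \<eta>" "\<eta> \<le> 1" "1 \<le> K" by (auto simp: \<eta>_def K_def)
  moreover have "integrable M (\<lambda>x. (1 + 2 powr (p+1) * norm (v x) powr p) * (if 2*\<eta> \<le> norm (v x) \<and> norm (v x) \<le> K/2 then 0 else 1))"
    using si unfolding s_def w0_def \<eta>_def K_def .
  moreover have "(\<integral>x. (1 + 2 powr (p+1) * norm (v x) powr p) * (if 2*\<eta> \<le> norm (v x) \<and> norm (v x) \<le> K/2 then 0 else 1) \<partial>M) < c"
    using n unfolding s_def w0_def \<eta>_def K_def .
  ultimately show ?thesis by (intro exI[of _ \<eta>] exI[of _ K] conjI)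
qed


theorem propositionA2:
  fixes \<Omega> :: "'n::euclidean_space set" and a p :: real and v :: "'n \<Rightarrow> complex"
  assumes "open \<Omega>" and "bounded \<Omega>"
    and "a > 0" and "p = 2 * (a + 1)"
    and "memLp \<Omega> p v"
    and "AE x in lebesgue_on \<Omega>. v x \<noteq> 0"
  shows "\<forall>\<epsilon>>0. \<exists>\<delta>>0. \<forall>\<alpha> w. \<alpha> \<le> a \<and> memLp \<Omega> p w \<and> \<bar>\<alpha> - 0\<bar> < \<delta>
            \<and> Lpnorm \<Omega> p (\<lambda>x. w x - v x) < \<delta> \<longrightarrow>
            opnorm_p2 \<Omega> p (\<lambda>u x. dG \<alpha> w u x - dG 0 v u x) < ereal \<epsilon>"
proof (intro allI impI)
  fix \<epsilon> :: real assume \<epsilon>: "\<epsilon> > 0"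
  define M where "M = lebesgue_on \<Omega>"
  have \<Omega>l: "\<Omega> \<in> lmeasurable" using assms(1,2) by (intro lmeasurable_open)
  have fm: "finite_measure M" unfolding M_def using \<Omega>l by (rule finite_measure_lebesgue_on)
  interpret finite_measure M by (rule fm)
  have a: "a > 0" by fact
  have p: "p = 2*(a+1)" by fact
  have p0: "p > 0" using a p by simp
  define q where "q = p / a"
  have q0: "q > 0" using a p0 by (simp add: q_def)
  have vm: "v \<in> borel_measurable M" and vi: "integrable M (\<lambda>x. norm (v x) powr p)"
    using assms(5) by (auto simp: memLp_def M_def)
  have ae: "AE x in M. v x \<noteq> 0" unfolding M_def by (rule assms(6))
  define E where "E = (\<epsilon>/2)^2"
  have E0: "E > 0" using \<epsilon> by (simp add: E_def)
  define t where "t = (2/E) powr (1/(a+1))"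
  have t0: "t > 0" using E0 by (simp add: t_def)
  define T2 where "T2 = t powr (-(a+1))"
  have T2: "T2 = E/2"
  proof -
    have "T2 = (2/E) powr ((1/(a+1)) * (-(a+1)))" unfolding T2_def t_def by (simp add: powr_powr)
    also have "(1/(a+1)) * (-(a+1)) = -1" using a by (simp add: field_simps)
    finally show ?thesis using E0 by (simp add: powr_minus_divide)
  qed
  define T1 where "T1 = t powr ((a+1)/a)"
  have T1: "T1 > 0" using t0 by (simp add: T1_def)
  define R where "R = E / (2*T1)"
  have R0: "R > 0" using E0 T1 by (simp add: R_def)
  define Cq where "Cq = ((2+a)*2) powr q"
  have Cq: "Cq > 0" using a by (simp add: Cq_def)
  obtain \<eta> K where eK: "0 < \<eta>" "\<eta> \<le> 1" "1 \<le> K" "2*\<eta> \<le> K/2"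
    and f1i: "integrable M (\<lambda>x. (1 + 2 powr (p+1) * norm (v x) powr p) * (if 2*\<eta> \<le> norm (v x) \<and> norm (v x) \<le> K/2 then 0 else 1))"
    and f1b: "(\<integral>x. (1 + 2 powr (p+1) * norm (v x) powr p) * (if 2*\<eta> \<le> norm (v x) \<and> norm (v x) \<le> K/2 then 0 else 1) \<partial>M) < R/(3*Cq)"
    using choose_eta_K[OF fm vm vi ae, of "R/(3*Cq)"] R0 Cq by auto
  define \<mu> where "\<mu> = measure M (space M)"
  have \<mu>0: "\<mu> \<ge> 0" by (simp add: \<mu>_def)
  obtain \<alpha>0 where a0: "\<alpha>0 > 0" "\<alpha>0 \<le> a"
    and S0b: "((K powr \<alpha>0 - 1) + (1 - \<eta> powr \<alpha>0) + \<alpha>0 * K powr \<alpha>0) powr q * \<mu> \<le> R/3"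
    using choose_alpha0[of \<eta> K a q "R/3" \<mu>] eK a q0 R0 \<mu>0 by auto
  define S0 where "S0 = (K powr \<alpha>0 - 1) + (1 - \<eta> powr \<alpha>0) + \<alpha>0 * K powr \<alpha>0"
  define c1 where "c1 = (1 + 2 powr p * (K/2) powr p) / \<eta> powr p + 2 powr p"
  have c1: "c1 \<ge> 0" by (simp add: c1_def add_nonneg_nonneg)
  define \<delta>2 where "\<delta>2 = (R/(3*(Cq*c1+1))) powr (1/p)"
  have Cc: "Cq*c1 \<ge> 0" using Cq c1 by simp
  have \<delta>2: "\<delta>2 > 0" using R0 Cc by (simp add: \<delta>2_def add_nonneg_pos)
  have \<delta>2p: "\<delta>2 powr p = R/(3*(Cq*c1+1))"
    using R0 Cc p0 by (simp add: \<delta>2_def powr_powr add_nonneg_pos)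
  define \<delta> where "\<delta> = min \<alpha>0 \<delta>2"
  show "\<exists>\<delta>>0. \<forall>\<alpha> w. \<alpha> \<le> a \<and> memLp \<Omega> p w \<and> \<bar>\<alpha> - 0\<bar> < \<delta>
            \<and> Lpnorm \<Omega> p (\<lambda>x. w x - v x) < \<delta> \<longrightarrow>
            opnorm_p2 \<Omega> p (\<lambda>u x. dG \<alpha> w u x - dG 0 v u x) < ereal \<epsilon>"
  proof (intro exI[of _ \<delta>] conjI allI impI)
    show "\<delta> > 0" using a0 \<delta>2 by (simp add: \<delta>_def)
    fix \<alpha> w assume H: "\<alpha> \<le> a \<and> memLp \<Omega> p w \<and> \<bar>\<alpha> - 0\<bar> < \<delta> \<and> Lpnorm \<Omega> p (\<lambda>x. w x - v x) < \<delta>"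
    have main: "(\<integral>x. norm (dG \<alpha> w u x - dG 0 v u x) powr 2 \<partial>M) \<le> E"
      if u: "memLp \<Omega> p u" "Lpnorm \<Omega> p u \<le> 1" for u
    proof (cases "\<alpha> > 0")
      case False
      then have "\<And>x. dG \<alpha> w u x - dG 0 v u x = 0" by (simp add: dG_def)
      then show ?thesis using E0 by simp
    next
      case True
      have aa0: "\<alpha> \<le> \<alpha>0" using H by (auto simp: \<delta>_def)
      have wm: "w \<in> borel_measurable M" and wi: "integrable M (\<lambda>x. norm (w x) powr p)"
        using H by (auto simp: memLp_def M_def)
      have um: "u \<in> borel_measurable M" and ui: "integrable M (\<lambda>x. norm (u x) powr p)"
        using u by (auto simp: memLp_def M_def)
      note [measurable] = vm wm um
      define f1 where "f1 = (\<lambda>x. (1 + 2 powr (p+1) * norm (v x) powr p) * (if 2*\<eta> \<le> norm (v x) \<and> norm (v x) \<le> K/2 then 0 else 1))"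
      define f2 where "f2 = (\<lambda>x. norm (w x - v x) powr p)"
      define f3 where "f3 = (\<lambda>x. norm (u x) powr p)"
      have f2i: "integrable M f2"
      proof (rule Bochner_Integration.integrable_bound)
        show "integrable M (\<lambda>x. 2 powr p * (norm (w x) powr p + norm (v x) powr p))"
          using wi vi by auto
        show "f2 \<in> borel_measurable M" unfolding f2_def by measurable
        show "AE x in M. norm (f2 x) \<le> norm (2 powr p * (norm (w x) powr p + norm (v x) powr p))"
        proof (intro AE_I2)
          fix x
          have "f2 x \<le> (norm (w x) + norm (v x)) powr p"
            unfolding f2_def using p0 norm_triangle_ineq4[of "w x" "v x"] by (intro powr_mono2) auto
          also have "\<dots> \<le> 2 powr p * (norm (w x) powr p + norm (v x) powr p)"
            using p0 by (intro powr_sum_le) auto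
          finally show "norm (f2 x) \<le> norm (2 powr p * (norm (w x) powr p + norm (v x) powr p))"
            by (simp add: f2_def)
        qed
      qed
      define B where "B = (\<lambda>x. T1 * (S0 powr q + Cq * (f1 x + c1 * f2 x)) + T2 * f3 x)"
      have pw: "norm (dG \<alpha> w u x - dG 0 v u x) powr 2 \<le> B x" for x
      proof -
        have eq: "dG \<alpha> w u x - dG 0 v u x = (if w x = 0 then 0 else
          complex_of_real (norm (w x) powr \<alpha>) * u x
          + complex_of_real (\<alpha> * norm (w x) powr (\<alpha> - 2) * Re (cnj (w x) * u x)) * w x) - u x"
          using True by (simp add: dG_def)
        show ?thesis unfolding eq B_def f1_def f2_def f3_def T1_def T2_def S0_def Cq_def c1_def q_def p
          using pointwise_bound[of a \<alpha> \<alpha>0 \<eta> K t "w x" "u x" "v x"] a True aa0 a0 eK t0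
          by simp
      qed
      have B0: "B x \<ge> 0" for x
        unfolding B_def f1_def f2_def f3_def using T1 Cq c1 t0 by (simp add: T2_def add_nonneg_nonneg)
      have Bi: "integrable M B" unfolding B_def using f1i f2i ui
        by (auto simp: f1_def f3_def)
      have "(\<integral>x. norm (dG \<alpha> w u x - dG 0 v u x) powr 2 \<partial>M) \<le> integral\<^sup>L M B"
        using Bi pw B0 by (intro integral_mono') auto
      also have "integral\<^sup>L M B = T1 * (S0 powr q * \<mu> + Cq * (integral\<^sup>L M f1 + c1 * integral\<^sup>L M f2)) + T2 * integral\<^sup>L M f3"
      proof -
        have f1i': "integrable M f1" using f1i unfolding f1_def .
        have f3i: "integrable M f3" using ui unfolding f3_def .
        have i1: "integrable M (\<lambda>x. Cq * (f1 x + c1 * f2 x))" using f1i' f2i by auto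
        have i2: "integrable M (\<lambda>x. T1 * (S0 powr q + Cq * (f1 x + c1 * f2 x)))" using i1 by auto
        have "integral\<^sup>L M B = (\<integral>x. T1 * (S0 powr q + Cq * (f1 x + c1 * f2 x)) \<partial>M) + (\<integral>x. T2 * f3 x \<partial>M)"
          unfolding B_def using i2 f3i by (intro Bochner_Integration.integral_add) auto
        also have "(\<integral>x. T2 * f3 x \<partial>M) = T2 * integral\<^sup>L M f3" by simp
        also have "(\<integral>x. T1 * (S0 powr q + Cq * (f1 x + c1 * f2 x)) \<partial>M) = T1 * (\<integral>x. S0 powr q + Cq * (f1 x + c1 * f2 x) \<partial>M)"
          by simp
        also have "(\<integral>x. S0 powr q + Cq * (f1 x + c1 * f2 x) \<partial>M) = (\<integral>x. S0 powr q \<partial>M) + (\<integral>x. Cq * (f1 x + c1 * f2 x) \<partial>M)"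
          using i1 by (intro Bochner_Integration.integral_add) auto
        also have "(\<integral>x. S0 powr q \<partial>M) = S0 powr q * \<mu>" by (simp add: \<mu>_def)
        also have "(\<integral>x. Cq * (f1 x + c1 * f2 x) \<partial>M) = Cq * (\<integral>x. f1 x + c1 * f2 x \<partial>M)" by simp
        also have "(\<integral>x. f1 x + c1 * f2 x \<partial>M) = integral\<^sup>L M f1 + (\<integral>x. c1 * f2 x \<partial>M)"
          using f1i' f2i by (intro Bochner_Integration.integral_add) auto
        also have "(\<integral>x. c1 * f2 x \<partial>M) = c1 * integral\<^sup>L M f2" by simp
        finally show ?thesis .
      qed
      also have "\<dots> \<le> E"
      proof -
        have s1: "S0 powr q * \<mu> \<le> R/3" using S0b unfolding S0_def .
        have s2: "Cq * integral\<^sup>L M f1 \<le> R/3"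
        proof -
          have "integral\<^sup>L M f1 < R/(3*Cq)" using f1b unfolding f1_def .
          then have "Cq * integral\<^sup>L M f1 \<le> Cq * (R/(3*Cq))" using Cq
            by (intro mult_left_mono) auto
          also have "Cq * (R/(3*Cq)) = R/3" using Cq by simp
          finally show ?thesis .
        qed
        have I2: "integral\<^sup>L M f2 < \<delta> powr p"
          unfolding f2_def M_def using p0 H by (intro Lpnorm_less) auto
        have I20: "integral\<^sup>L M f2 \<ge> 0" unfolding f2_def by (simp add: Bochner_Integration.integral_nonneg)
        have "\<delta> powr p \<le> \<delta>2 powr p" using p0 a0 \<delta>2 by (intro powr_mono2) (auto simp: \<delta>_def)
        then have I2': "integral\<^sup>L M f2 \<le> R/(3*(Cq*c1+1))" using I2 \<delta>2p by simp
        have s3: "Cq * (c1 * integral\<^sup>L M f2) \<le> R/3"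
        proof -
          have "Cq * (c1 * integral\<^sup>L M f2) = (Cq * c1) * integral\<^sup>L M f2" by simp
          also have "\<dots> \<le> (Cq*c1) * (R/(3*(Cq*c1+1)))" using I2' Cc by (intro mult_left_mono)
          also have "\<dots> = R/3 * ((Cq*c1) / (Cq*c1+1))" using Cc by (simp add: field_simps)
          also have "\<dots> \<le> R/3 * 1" using Cc R0 by (intro mult_left_mono) auto
          finally show ?thesis by simp
        qed
        have I3: "integral\<^sup>L M f3 \<le> 1"
          using Lpnorm_le[of p \<Omega> u 1] p0 u unfolding f3_def M_def by simp
        have "T2 * integral\<^sup>L M f3 \<le> T2 * 1" using I3 T2 E0 by (intro mult_left_mono) auto
        then have "T2 * integral\<^sup>L M f3 \<le> E/2" by (simp only: mult_1_right T2)
        moreover have "T1 * (S0 powr q * \<mu> + Cq * (integral\<^sup>L M f1 + c1 * integral\<^sup>L M f2)) \<le> T1 * R"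
          using s1 s2 s3 T1 by (intro mult_left_mono) (auto simp: distrib_left)
        moreover have "T1 * R = E/2" using T1 by (simp add: R_def)
        ultimately show ?thesis by simp
      qed
      finally show ?thesis .
    qed
    have "Lpnorm \<Omega> 2 (\<lambda>x. dG \<alpha> w u x - dG 0 v u x) \<le> \<epsilon>/2"
      if u: "memLp \<Omega> p u" "Lpnorm \<Omega> p u \<le> 1" for u
    proof -
      have "Lpnorm \<Omega> 2 (\<lambda>x. dG \<alpha> w u x - dG 0 v u x)
         = (\<integral>x. norm (dG \<alpha> w u x - dG 0 v u x) powr 2 \<partial>M) powr (1/2)"
        by (simp add: Lpnorm_def M_def)
      also have "\<dots> \<le> E powr (1/2)"
        using main[OF u] by (intro powr_mono2) (auto simp: Bochner_Integration.integral_nonneg)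
      also have "E powr (1/2) = \<epsilon>/2" using \<epsilon> by (simp add: E_def powr_half_sqrt)
      finally show ?thesis .
    qed
    then have "opnorm_p2 \<Omega> p (\<lambda>u x. dG \<alpha> w u x - dG 0 v u x) \<le> ereal (\<epsilon>/2)"
      unfolding opnorm_p2_def by (intro SUP_least) auto
    also have "ereal (\<epsilon>/2) < ereal \<epsilon>" using \<epsilon> by simp
    finally show "opnorm_p2 \<Omega> p (\<lambda>u x. dG \<alpha> w u x - dG 0 v u x) < ereal \<epsilon>" .
  qed
qed

end
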